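(* Let $\alpha\in(0,1]$, $\gamma\geqslant0$, and let $g,g_0,g_1:(0,\infty)^2\to\mathbb{R}$ with $g>0$, $g_0\geqslant0$, $g_1\geqslant0$, $g=g_0+g_1$, such that (i) $e^{\gamma(x+y)}g(x,y)=e^{\gamma(1/x+1/y)}g(1/x,1/y)$ for all $x,y>0$; (ii) $g_1(x,y)\leqslant e^{-\alpha\gamma(x-x')}g_1(x',y)$ for all $0<x'\leqslant x$, $y>0$, and $g_1(x,y)\leqslant e^{-\alpha\gamma(y-y')}g_1(x,y')$ for all $0<y'\leqslant y$, $x>0$. Then for every $(x,y)\in\Omega_\alpha$ the algorithm $\mathsf{B}_\alpha$ (see context) started at $(x,y)$ is well defined and stops after a finite number $N$ of points $(x_1,y_1),\dots,(x_N,y_N)$, and $$g(x,y)\leqslant\sum_{i=1}^N g_0(x_i,y_i)+g_1(x_N,y_N).$$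
   Context: Let $f_\alpha(x)=\max\left\{\frac1x,\ \frac12\left(\alpha(2-x)+\sqrt{\alpha^2(2-x)^2+4(1-\alpha)}\right)\right\}$ and $\Omega_\alpha=\{(x,y): x>1,\ y>f_\alpha(x)\}\cup\{(x,y): y>1,\ x>f_\alpha(y)\}$. Algorithm $\mathsf{B}_\alpha$: set $(x_1,y_1)=(x,y)$. Given $(a,b)=(x_i,y_i)$: (1) if $a>1$ and $b>1$, stop and set $N=i$. (2) If $a\leqslant1$: put $\tilde a=a$ if $a<1$ and $\tilde a=\frac{2}{\alpha(b-1)+2}$ if $a=1$; let $s>0$ be the unique positive solution of $\alpha b+\tilde a-\frac1{\tilde a}+(1-\alpha)s-\frac1s=0$; set $(x_{i+1},y_{i+1})=(1/\tilde a,\ 1/s)$. (3) Otherwise ($a>1$, $b\leqslant1$): same with the roles of the two coordinates exchanged, i.e. $\tilde b=b$ if $b<1$, $\tilde b=\frac{2}{\alpha(a-1)+2}$ if $b=1$, $s>0$ the unique positive solution of $\alpha a+\tilde b-\frac1{\tilde b}+(1-\alpha)s-\frac1s=0$, and $(x_{i+1},y_{i+1})=(1/s,\ 1/\tilde b)$. *)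

theory Defs
  imports Complex_Main
begin

definition f_alpha :: "real \<Rightarrow> real \<Rightarrow> real" where
  "f_alpha \<alpha> x = max (1 / x)
     ((\<alpha> * (2 - x) + sqrt (\<alpha>\<^sup>2 * (2 - x)\<^sup>2 + 4 * (1 - \<alpha>))) / 2)"

definition Omega_alpha :: "real \<Rightarrow> (real \<times> real) set" where
  "Omega_alpha \<alpha> = {(x, y). x > 1 \<and> y > f_alpha \<alpha> x} \<union> {(x, y). y > 1 \<and> x > f_alpha \<alpha> y}"

definition B_tilde :: "real \<Rightarrow> real \<Rightarrow> real \<Rightarrow> real" where
  "B_tilde \<alpha> a b = (if a < 1 then a else 2 / (\<alpha> * (b - 1) + 2))"

definition B_eq :: "real \<Rightarrow> real \<Rightarrow> real \<Rightarrow> real \<Rightarrow> bool" where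
  "B_eq \<alpha> b t s \<longleftrightarrow> s > 0 \<and> \<alpha> * b + t - 1 / t + (1 - \<alpha>) * s - 1 / s = 0"

definition B_s :: "real \<Rightarrow> real \<Rightarrow> real \<Rightarrow> real" where
  "B_s \<alpha> b t = (THE s. B_eq \<alpha> b t s)"

definition B_step :: "real \<Rightarrow> real \<times> real \<Rightarrow> real \<times> real" where
  "B_step \<alpha> p = (case p of (a, b) \<Rightarrow>
     if a > 1 \<and> b > 1 then (a, b)
     else if a \<le> 1 then
       (let t = B_tilde \<alpha> a b in (1 / t, 1 / B_s \<alpha> b t))
     else
       (let t = B_tilde \<alpha> b a in (1 / B_s \<alpha> a t, 1 / t)))"

definition B_welldef :: "real \<Rightarrow> real \<times> real \<Rightarrow> bool" where
  "B_welldef \<alpha> p = (case p of (a, b) \<Rightarrow>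
     if a \<le> 1 then
       (B_tilde \<alpha> a b > 0 \<and> (\<exists>!s. B_eq \<alpha> b (B_tilde \<alpha> a b) s))
     else
       (B_tilde \<alpha> b a > 0 \<and> (\<exists>!s. B_eq \<alpha> a (B_tilde \<alpha> b a) s)))"

definition B_pt :: "real \<Rightarrow> real \<times> real \<Rightarrow> nat \<Rightarrow> real \<times> real" where
  "B_pt \<alpha> p i = (B_step \<alpha> ^^ (i - 1)) p"

end

theory Submission
  imports Defs
begin

definition psi :: "real \<Rightarrow> real \<Rightarrow> real" where
  "psi \<alpha> s = (1 - \<alpha>) * s - 1 / s"

lemma psi_strict_mono:
  assumes "\<alpha> \<le> 1" "0 < u" "u < v"
  shows "psi \<alpha> u < psi \<alpha> v"
proof -
  have "(1 - \<alpha>) * u \<le> (1 - \<alpha>) * v" using assms by (intro mult_left_mono) auto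
  moreover have "1 / v < 1 / u" using assms by (simp add: divide_strict_left_mono)
  ultimately show ?thesis unfolding psi_def by linarith
qed

lemma psi_le_iff:
  assumes "\<alpha> \<le> 1" "0 < u" "0 < v"
  shows "psi \<alpha> u \<le> psi \<alpha> v \<longleftrightarrow> u \<le> v"
  using psi_strict_mono[OF assms(1)] assms
  by (metis linorder_not_le order_le_less)

lemma psi_less_iff:
  assumes "\<alpha> \<le> 1" "0 < u" "0 < v"
  shows "psi \<alpha> u < psi \<alpha> v \<longleftrightarrow> u < v"
  using psi_le_iff[OF assms(1) assms(3) assms(2)] by linarith

lemma tilde_props:
  assumes al: "0 < \<alpha>" "\<alpha> \<le> 1" and a: "0 < a" "a \<le> 1" "a * b > 1"
  defines "t \<equiv> B_tilde \<alpha> a b"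
  shows "0 < t" "t < 1" "t \<le> a" "t * b > 1" "a < 1 \<Longrightarrow> t = a"
        "a = 1 \<Longrightarrow> t = 2 / (\<alpha> * (b - 1) + 2)"
proof -
  show "a < 1 \<Longrightarrow> t = a" "a = 1 \<Longrightarrow> t = 2 / (\<alpha> * (b - 1) + 2)" unfolding t_def B_tilde_def by auto
  have "0 < t \<and> t < 1 \<and> t \<le> a \<and> t * b > 1"
  proof (cases "a < 1")
    case True then show ?thesis using a unfolding t_def B_tilde_def by auto
  next
    case False
    then have a1: "a = 1" using a by auto
    then have bb: "b > 1" using a by auto
    have d: "\<alpha> * (b - 1) + 2 > 2" using al bb by simp
    have t: "t = 2 / (\<alpha> * (b - 1) + 2)" unfolding t_def B_tilde_def using a1 by auto
    have "t * b > 1"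
    proof -
      have "\<alpha> * (b - 1) < 2 * (b - 1)" using al bb by (intro mult_strict_right_mono) auto
      then have "\<alpha> * (b - 1) + 2 < 2 * b" by simp
      then show ?thesis using d unfolding t by (simp add: field_simps)
    qed
    then show ?thesis using d a1 unfolding t by (simp add: field_simps)
  qed
  then show "0 < t" "t < 1" "t \<le> a" "t * b > 1" by auto
qed

lemma B_eq_psi: "B_eq \<alpha> b t s \<longleftrightarrow> s > 0 \<and> \<alpha> * b + t - 1 / t + psi \<alpha> s = 0"
  unfolding B_eq_def psi_def by (simp add: diff_add_eq add_diff_eq)

lemma s_props:
  assumes al: "0 < \<alpha>" "\<alpha> \<le> 1" and t: "0 < t" "t < 1" "t * b > 1"
  shows "\<exists>!s. B_eq \<alpha> b t s" "B_s \<alpha> b t > 0"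
    "\<alpha> * b + t - 1 / t + psi \<alpha> (B_s \<alpha> b t) = 0"
    "B_s \<alpha> b t < b" "B_s \<alpha> b t * t < 1"
proof -
  define C where "C = \<alpha> * b + t - 1 / t"
  define R where "R = sqrt (C\<^sup>2 + 4 * (1 - \<alpha>))"
  have R2: "R\<^sup>2 = C\<^sup>2 + 4 * (1 - \<alpha>)" unfolding R_def using al by simp
  have RC: "R \<ge> \<bar>C\<bar>" unfolding R_def by (rule real_le_rsqrt) (use al in simp)
  have b1t: "b > 1 / t" using t by (simp add: field_simps)
  have CR: "C + R > 0"
  proof (cases "\<alpha> = 1")
    case True
    have "C > 0" unfolding C_def True using b1t t by simp
    then show ?thesis using RC by linarith
  next
    case False
    then have "R\<^sup>2 > C\<^sup>2" using R2 al by simp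
    then have "\<bar>C\<bar>^2 < R^2" by simp
    then have "R > \<bar>C\<bar>" by (rule power_less_imp_less_base) (use RC in linarith)
    then show ?thesis by linarith
  qed
  define s0 where "s0 = 2 / (C + R)"
  have s0pos: "s0 > 0" unfolding s0_def using CR by simp
  have "C + psi \<alpha> s0 = 0"
  proof -
    have "C + psi \<alpha> s0 = C + (1 - \<alpha>) * 2 / (C + R) - (C + R) / 2"
      unfolding psi_def s0_def by simp
    also have "\<dots> = (2 * C * (C + R) + 4 * (1 - \<alpha>) - (C + R)\<^sup>2) / (2 * (C + R))"
      using CR by (simp add: field_simps power2_eq_square)
    also have "\<dots> = 0" using R2 by (simp add: power2_eq_square algebra_simps)
    finally show ?thesis .
  qed
  then have eq0: "B_eq \<alpha> b t s0" unfolding B_eq_psi C_def using s0pos by simp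
  have uniq: "s' = s0" if "B_eq \<alpha> b t s'" for s'
  proof -
    have "psi \<alpha> s' = psi \<alpha> s0" "s' > 0" using that eq0 unfolding B_eq_psi by auto
    then show ?thesis using psi_le_iff[OF al(2) \<open>s' > 0\<close> s0pos] psi_le_iff[OF al(2) s0pos \<open>s' > 0\<close>] by simp
  qed
  show "\<exists>!s. B_eq \<alpha> b t s" using eq0 uniq by blast
  have Bs: "B_s \<alpha> b t = s0" unfolding B_s_def using eq0 uniq by (rule the_equality)
  show "B_s \<alpha> b t > 0" using Bs s0pos by simp
  show e: "\<alpha> * b + t - 1 / t + psi \<alpha> (B_s \<alpha> b t) = 0" using eq0 Bs unfolding B_eq_psi by simp
  have bpos: "b > 0" using b1t t by (meson less_trans zero_less_divide_1_iff)
  have "psi \<alpha> s0 < psi \<alpha> b"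
  proof -
    have "psi \<alpha> s0 = 1 / t - t - \<alpha> * b" using e Bs by simp
    moreover have "1 / t - t < b - 1 / b"
    proof -
      have "1 / b < t" using b1t t bpos by (simp add: field_simps)
      then show ?thesis using b1t by linarith
    qed
    ultimately show ?thesis unfolding psi_def by (simp add: algebra_simps)
  qed
  then show "B_s \<alpha> b t < b" using Bs psi_less_iff[OF al(2) s0pos bpos] by simp
  have "psi \<alpha> s0 < psi \<alpha> (1 / t)"
  proof -
    have "psi \<alpha> s0 = 1 / t - t - \<alpha> * b" using e Bs by simp
    moreover have "\<alpha> * (1 / t) < \<alpha> * b" using b1t al by (intro mult_strict_left_mono) auto
    moreover have "psi \<alpha> (1 / t) = 1 / t - t - \<alpha> * (1 / t)" unfolding psi_def by (simp add: diff_divide_distrib)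
    ultimately show ?thesis by linarith
  qed
  then have "s0 < 1 / t" using psi_less_iff[OF al(2) s0pos] t by simp
  then show "B_s \<alpha> b t * t < 1" using Bs t by (simp add: field_simps)
qed

lemma step_left:
  assumes al: "0 < \<alpha>" "\<alpha> \<le> 1" and a: "0 < a" "a \<le> 1" "a * b > 1"
  defines "t \<equiv> B_tilde \<alpha> a b"
  defines "s \<equiv> B_s \<alpha> b t"
  shows "B_step \<alpha> (a, b) = (1 / t, 1 / s)" "B_welldef \<alpha> (a, b)"
    "0 < t" "t < 1" "t \<le> a" "0 < s" "s < b" "s * t < 1"
    "\<alpha> * b + t - 1 / t + psi \<alpha> s = 0"
    "a < 1 \<Longrightarrow> t = a" "a = 1 \<Longrightarrow> s < 1"
proof -
  note T = tilde_props[OF al a, folded t_def]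
  note S = s_props[OF al T(1,2,4), folded s_def]
  show "B_step \<alpha> (a, b) = (1 / t, 1 / s)" unfolding B_step_def t_def s_def using a by (simp add: Let_def)
  show "B_welldef \<alpha> (a, b)" unfolding B_welldef_def using a T S(1) by (simp add: t_def)
  show "0 < t" "t < 1" "t \<le> a" "a < 1 \<Longrightarrow> t = a" using T by auto
  show "0 < s" "s < b" "s * t < 1" "\<alpha> * b + t - 1 / t + psi \<alpha> s = 0" using S by auto
  show "s < 1" if a1: "a = 1"
  proof -
    have bb: "b > 1" using a a1 by simp
    define T' where "T' = (\<alpha> * (b - 1) + 2) / 2"
    have T'1: "T' > 1" unfolding T'_def using al bb by simp
    have tT: "t = 1 / T'" using T(6)[OF a1] unfolding T'_def by simp
    have ab: "\<alpha> * b = \<alpha> + 2 * (T' - 1)" unfolding T'_def by (simp add: field_simps)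
    have ps: "psi \<alpha> s = T' - 1 / T' - \<alpha> * b" using S(3) tT by simp
    have "T' + 1 / T' > 2"
    proof -
      have "(T' - 1)\<^sup>2 > 0" using T'1 by simp
      then have "T' * T' + 1 > 2 * T'" by (simp add: power2_eq_square algebra_simps)
      then have "(T' * T' + 1) / T' > 2" using T'1 by (simp add: field_simps)
      then show ?thesis using T'1 by (simp add: field_simps)
    qed
    then have "psi \<alpha> s < psi \<alpha> 1" using ps ab unfolding psi_def by simp
    then show "s < 1" using psi_less_iff[OF al(2) S(2)] by simp
  qed
qed

lemma g_left:
  fixes g hh hk :: "real \<Rightarrow> real \<Rightarrow> real"
  assumes al: "0 < \<alpha>" "\<alpha> \<le> 1" and ga: "0 \<le> \<gamma>"
    and g0p: "\<And>x y. x > 0 \<Longrightarrow> y > 0 \<Longrightarrow> hh x y \<ge> 0"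
    and g1p: "\<And>x y. x > 0 \<Longrightarrow> y > 0 \<Longrightarrow> hk x y \<ge> 0"
    and gs: "\<And>x y. x > 0 \<Longrightarrow> y > 0 \<Longrightarrow> g x y = hh x y + hk x y"
    and gi: "\<And>x y. x > 0 \<Longrightarrow> y > 0 \<Longrightarrow>
           exp (\<gamma> * (x + y)) * g x y = exp (\<gamma> * (1 / x + 1 / y)) * g (1 / x) (1 / y)"
    and gx: "\<And>x x' y. 0 < x' \<Longrightarrow> x' \<le> x \<Longrightarrow> y > 0 \<Longrightarrow>
           hk x y \<le> exp (- \<alpha> * \<gamma> * (x - x')) * hk x' y"
    and gy: "\<And>x y y'. 0 < y' \<Longrightarrow> y' \<le> y \<Longrightarrow> x > 0 \<Longrightarrow>
           hk x y \<le> exp (- \<alpha> * \<gamma> * (y - y')) * hk x y'"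
    and a: "0 < a" "a \<le> 1" "a * b > 1"
  shows "hk a b \<le> g (1 / B_tilde \<alpha> a b) (1 / B_s \<alpha> b (B_tilde \<alpha> a b))"
proof -
  define t where "t = B_tilde \<alpha> a b"
  define s where "s = B_s \<alpha> b t"
  note St = step_left[OF al a, folded t_def, folded s_def]
  have bpos: "b > 0" using a by (metis mult_pos_pos not_less_iff_gr_or_eq order_less_trans zero_less_mult_pos zero_less_one)
  have h1: "hk a b \<le> exp (- \<alpha> * \<gamma> * (a - t)) * hk t b" using gx St bpos by auto
  have h2: "hk t b \<le> exp (- \<alpha> * \<gamma> * (b - s)) * hk t s" using gy St bpos by auto
  have h3: "hk t s \<le> g t s" using gs g0p St by fastforce
  have e1: "exp (- \<alpha> * \<gamma> * (a - t)) \<le> 1" using al ga St by (simp add: mult_nonneg_nonneg)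
  have ex: "\<gamma> * (t + s) = \<gamma> * (1 / t + 1 / s) + (- \<alpha> * \<gamma> * (b - s))"
  proof -
    have "t + s = 1 / t + 1 / s - \<alpha> * (b - s)" using St(9) unfolding psi_def by (simp add: algebra_simps)
    then have "\<gamma> * (t + s) = \<gamma> * (1 / t + 1 / s - \<alpha> * (b - s))" by simp
    also have "\<dots> = \<gamma> * (1 / t + 1 / s) + (- \<alpha> * \<gamma> * (b - s))" by (simp add: algebra_simps)
    finally show ?thesis .
  qed
  have h4: "g (1 / t) (1 / s) = exp (- \<alpha> * \<gamma> * (b - s)) * g t s"
  proof -
    have "exp (\<gamma> * (t + s)) * g t s = exp (\<gamma> * (1 / t + 1 / s)) * g (1 / t) (1 / s)"
      using gi[of t s] St by simp
    moreover have "exp (\<gamma> * (t + s)) = exp (\<gamma> * (1 / t + 1 / s)) * exp (- \<alpha> * \<gamma> * (b - s))"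
      unfolding ex by (rule exp_add)
    ultimately have "exp (\<gamma> * (1 / t + 1 / s)) * (exp (- \<alpha> * \<gamma> * (b - s)) * g t s)
        = exp (\<gamma> * (1 / t + 1 / s)) * g (1 / t) (1 / s)" by (simp add: mult.assoc)
    then show ?thesis by simp
  qed
  have "hk a b \<le> exp (- \<alpha> * \<gamma> * (a - t)) * (exp (- \<alpha> * \<gamma> * (b - s)) * hk t s)"
    using h1 h2 by (meson exp_ge_zero mult_left_mono order_trans)
  also have "\<dots> \<le> 1 * (exp (- \<alpha> * \<gamma> * (b - s)) * hk t s)"
    using e1 g1p St by (intro mult_right_mono) auto
  also have "\<dots> \<le> exp (- \<alpha> * \<gamma> * (b - s)) * g t s" using h3 by simp
  finally show ?thesis using h4 t_def s_def by simp
qed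

definition good :: "real \<Rightarrow> real \<times> real \<Rightarrow> bool" where
  "good \<alpha> p \<longleftrightarrow> 0 < fst p \<and> 0 < snd p \<and> 1 < fst p * snd p
     \<and> (fst p \<le> 1 \<longrightarrow> psi \<alpha> (1 / fst p) - \<alpha> * snd p < -2 * \<alpha>)
     \<and> (snd p \<le> 1 \<longrightarrow> psi \<alpha> (1 / snd p) - \<alpha> * fst p < -2 * \<alpha>)"

definition nonstop :: "real \<times> real \<Rightarrow> bool" where
  "nonstop p \<longleftrightarrow> \<not> (fst p > 1 \<and> snd p > 1)"

definition Lv :: "real \<times> real \<Rightarrow> real" where
  "Lv p = (if fst p \<le> 1 then snd p else fst p)"

definition Kv :: "real \<Rightarrow> real \<times> real \<Rightarrow> real" where
  "Kv \<alpha> p = (if fst p \<le> 1 then psi \<alpha> (1 / fst p) - \<alpha> * snd p else psi \<alpha> (1 / snd p) - \<alpha> * fst p)"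

lemma psi_diff_le:
  assumes "0 < \<alpha>" "\<alpha> \<le> 1" "1 \<le> z" "z < L"
  shows "psi \<alpha> L - psi \<alpha> z \<le> 2 * (L - z)"
proof -
  have zL: "z * L \<ge> 1" using mult_mono[of 1 z 1 L] assms by simp
  have "1 / z - 1 / L = (L - z) / (z * L)" using assms by (simp add: field_simps)
  also have "\<dots> \<le> (L - z) / 1"
    by (rule divide_left_mono) (use zL assms in auto)
  finally have 1: "1 / z - 1 / L \<le> L - z" by simp
  have 2: "(1 - \<alpha>) * (L - z) \<le> 1 * (L - z)" using assms by (intro mult_right_mono) auto
  have "psi \<alpha> L - psi \<alpha> z = (1 - \<alpha>) * (L - z) + (1 / z - 1 / L)" unfolding psi_def by (simp add: algebra_simps)
  also have "\<dots> \<le> (L - z) + (L - z)" using 1 2 by (intro add_mono) auto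
  finally show ?thesis by simp
qed

lemma step_left_full:
  assumes al: "0 < \<alpha>" "\<alpha> \<le> 1" and a: "0 < a" "a \<le> 1" "a * b > 1"
    and K: "psi \<alpha> (1 / a) - \<alpha> * b < -2 * \<alpha>"
  defines "q \<equiv> B_step \<alpha> (a, b)"
  shows "B_welldef \<alpha> (a, b)" "good \<alpha> q" "fst q > 1"
    "snd q \<le> 1 \<Longrightarrow> fst q = 1 / a \<and> 1 / a < b
        \<and> psi \<alpha> (1 / snd q) - \<alpha> * fst q = psi \<alpha> (1 / a) - \<alpha> * b
        \<and> b - 1 / a \<ge> (psi \<alpha> b - \<alpha> * b - (psi \<alpha> (1 / a) - \<alpha> * b)) / 2"
proof -
  define t where "t = B_tilde \<alpha> a b"
  define s where "s = B_s \<alpha> b t"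
  note St = step_left[OF al a, folded t_def, folded s_def]
  have q: "q = (1 / t, 1 / s)" using St(1) q_def by simp
  show "B_welldef \<alpha> (a, b)" using St by simp
  show "fst q > 1" using q St by simp
  have st: "1 < 1 / t * (1 / s)" using St by (simp add: field_simps)
  have Kq: "psi \<alpha> s - \<alpha> * (1 / t) = psi \<alpha> (1 / a) - \<alpha> * b" if "a < 1"
  proof -
    have "t = a" using St that by simp
    moreover have "psi \<alpha> (1 / a) = 1 / a - a - \<alpha> * (1 / a)" unfolding psi_def by (simp add: diff_divide_distrib)
    moreover have "\<alpha> * b + a - 1 / a + psi \<alpha> s = 0" using St(9) \<open>t = a\<close> by simp
    ultimately show ?thesis by simp
  qed
  have nst: "a < 1" if "1 / s \<le> 1"
  proof (rule ccontr)
    assume "\<not> a < 1" then have "a = 1" using a by simp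
    then have "s < 1" using St by simp
    then have "1 / s > 1" using St by (simp add: field_simps)
    then show False using that by simp
  qed
  have t1: "1 / t > 1" using St by (simp add: field_simps)
  have "snd q \<le> 1 \<longrightarrow> psi \<alpha> (1 / snd q) - \<alpha> * fst q < -2 * \<alpha>"
  proof
    assume "snd q \<le> 1"
    then have "a < 1" using nst q by simp
    then show "psi \<alpha> (1 / snd q) - \<alpha> * fst q < -2 * \<alpha>" using Kq K q by simp
  qed
  then show "good \<alpha> q" unfolding good_def using q St st t1 by simp
  show "snd q \<le> 1 \<Longrightarrow> fst q = 1 / a \<and> 1 / a < b
        \<and> psi \<alpha> (1 / snd q) - \<alpha> * fst q = psi \<alpha> (1 / a) - \<alpha> * b
        \<and> b - 1 / a \<ge> (psi \<alpha> b - \<alpha> * b - (psi \<alpha> (1 / a) - \<alpha> * b)) / 2"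
  proof -
    assume "snd q \<le> 1"
    then have a1: "a < 1" and ta: "t = a" using nst St q by auto
    have ab: "1 / a < b" using a by (simp add: field_simps)
    have "psi \<alpha> b - psi \<alpha> (1 / a) \<le> 2 * (b - 1 / a)"
      using psi_diff_le[OF al _ ab] a by simp
    then show ?thesis using q ta Kq[OF a1] ab by simp
  qed
qed

lemma swap_step:
  assumes "b \<le> 1" "1 < a"
  shows "B_step \<alpha> (a, b) = prod.swap (B_step \<alpha> (b, a))" "B_welldef \<alpha> (a, b) = B_welldef \<alpha> (b, a)"
  using assms unfolding B_step_def B_welldef_def by (auto simp: Let_def)

lemma step_full:
  assumes al: "0 < \<alpha>" "\<alpha> \<le> 1" and gp: "good \<alpha> p" and ns: "nonstop p"
  defines "q \<equiv> B_step \<alpha> p"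
  shows "B_welldef \<alpha> p" "good \<alpha> q"
    "nonstop q \<Longrightarrow> Kv \<alpha> q = Kv \<alpha> p \<and> Lv q < Lv p
        \<and> (psi \<alpha> (Lv p) - \<alpha> * Lv p - Kv \<alpha> p) / 2 \<le> Lv p - Lv q"
proof -
  obtain a b where p: "p = (a, b)" by (cases p)
  have a0: "0 < a" and b0: "0 < b" and ab: "1 < a * b" using gp p unfolding good_def by auto
  have "B_welldef \<alpha> p \<and> good \<alpha> q \<and> (nonstop q \<longrightarrow> Kv \<alpha> q = Kv \<alpha> p \<and> Lv q < Lv p
        \<and> (psi \<alpha> (Lv p) - \<alpha> * Lv p - Kv \<alpha> p) / 2 \<le> Lv p - Lv q)"
  proof (cases "a \<le> 1")
    case True
    have K: "psi \<alpha> (1 / a) - \<alpha> * b < -2 * \<alpha>" using gp p True unfolding good_def by auto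
    note S = step_left_full[OF al a0 True ab K, folded p q_def]
    have Lp: "Lv p = b" "Kv \<alpha> p = psi \<alpha> (1 / a) - \<alpha> * b" using p True unfolding Lv_def Kv_def by auto
    have "nonstop q \<longrightarrow> Kv \<alpha> q = Kv \<alpha> p \<and> Lv q < Lv p
        \<and> (psi \<alpha> (Lv p) - \<alpha> * Lv p - Kv \<alpha> p) / 2 \<le> Lv p - Lv q"
    proof
      assume "nonstop q"
      then have sq: "snd q \<le> 1" using S(3) unfolding nonstop_def by auto
      have Lq: "Lv q = fst q" "Kv \<alpha> q = psi \<alpha> (1 / snd q) - \<alpha> * fst q"
        using S(3) unfolding Lv_def Kv_def by auto
      show "Kv \<alpha> q = Kv \<alpha> p \<and> Lv q < Lv p
        \<and> (psi \<alpha> (Lv p) - \<alpha> * Lv p - Kv \<alpha> p) / 2 \<le> Lv p - Lv q"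
        using S(4)[OF sq] unfolding Lp Lq by auto
    qed
    then show ?thesis using S by simp
  next
    case False
    then have b1: "b \<le> 1" using ns p unfolding nonstop_def by auto
    have K: "psi \<alpha> (1 / b) - \<alpha> * a < -2 * \<alpha>" using gp p b1 unfolding good_def by auto
    have ba: "1 < b * a" using ab by (simp add: mult.commute)
    define q' where "q' = B_step \<alpha> (b, a)"
    note S = step_left_full[OF al b0 b1 ba K, folded q'_def]
    have qq: "q = prod.swap q'" using swap_step[OF b1] False unfolding q_def q'_def p by simp
    have wd: "B_welldef \<alpha> p" using swap_step[OF b1] False S(1) p by simp
    have gq: "good \<alpha> q" using S(2) qq unfolding good_def by (auto simp: mult.commute)
    have Lp: "Lv p = a" "Kv \<alpha> p = psi \<alpha> (1 / b) - \<alpha> * a" using p False unfolding Lv_def Kv_def by auto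
    have "nonstop q \<longrightarrow> Kv \<alpha> q = Kv \<alpha> p \<and> Lv q < Lv p
        \<and> (psi \<alpha> (Lv p) - \<alpha> * Lv p - Kv \<alpha> p) / 2 \<le> Lv p - Lv q"
    proof
      assume "nonstop q"
      then have sq: "snd q' \<le> 1" using S(3) qq unfolding nonstop_def by auto
      have Lq: "Lv q = fst q'" "Kv \<alpha> q = psi \<alpha> (1 / snd q') - \<alpha> * fst q'"
        using S(3) sq qq unfolding Lv_def Kv_def by auto
      show "Kv \<alpha> q = Kv \<alpha> p \<and> Lv q < Lv p
        \<and> (psi \<alpha> (Lv p) - \<alpha> * Lv p - Kv \<alpha> p) / 2 \<le> Lv p - Lv q"
        using S(4)[OF sq] unfolding Lp Lq by auto
    qed
    then show ?thesis using wd gq by simp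
  qed
  then show "B_welldef \<alpha> p" "good \<alpha> q"
    "nonstop q \<Longrightarrow> Kv \<alpha> q = Kv \<alpha> p \<and> Lv q < Lv p
        \<and> (psi \<alpha> (Lv p) - \<alpha> * Lv p - Kv \<alpha> p) / 2 \<le> Lv p - Lv q" by auto
qed

lemma g_full:
  fixes g g0 g1 :: "real \<Rightarrow> real \<Rightarrow> real"
  assumes al: "0 < \<alpha>" "\<alpha> \<le> 1" and ga: "0 \<le> \<gamma>"
    and g0p: "\<And>x y. x > 0 \<Longrightarrow> y > 0 \<Longrightarrow> g0 x y \<ge> 0"
    and g1p: "\<And>x y. x > 0 \<Longrightarrow> y > 0 \<Longrightarrow> g1 x y \<ge> 0"
    and gs: "\<And>x y. x > 0 \<Longrightarrow> y > 0 \<Longrightarrow> g x y = g0 x y + g1 x y"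
    and gi: "\<And>x y. x > 0 \<Longrightarrow> y > 0 \<Longrightarrow>
           exp (\<gamma> * (x + y)) * g x y = exp (\<gamma> * (1 / x + 1 / y)) * g (1 / x) (1 / y)"
    and gx: "\<And>x x' y. 0 < x' \<Longrightarrow> x' \<le> x \<Longrightarrow> y > 0 \<Longrightarrow>
           g1 x y \<le> exp (- \<alpha> * \<gamma> * (x - x')) * g1 x' y"
    and gy: "\<And>x y y'. 0 < y' \<Longrightarrow> y' \<le> y \<Longrightarrow> x > 0 \<Longrightarrow>
           g1 x y \<le> exp (- \<alpha> * \<gamma> * (y - y')) * g1 x y'"
    and gp: "good \<alpha> p" and ns: "nonstop p"
  shows "g1 (fst p) (snd p) \<le> g (fst (B_step \<alpha> p)) (snd (B_step \<alpha> p))"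
proof -
  obtain a b where p: "p = (a, b)" by (cases p)
  have a0: "0 < a" and b0: "0 < b" and ab: "1 < a * b" using gp p unfolding good_def by auto
  show ?thesis
  proof (cases "a \<le> 1")
    case True
    have "B_step \<alpha> (a, b) = (1 / B_tilde \<alpha> a b, 1 / B_s \<alpha> b (B_tilde \<alpha> a b))"
      using step_left(1)[OF al a0 True ab] by simp
    then show ?thesis using g_left[OF al ga g0p g1p gs gi gx gy a0 True ab] p by simp
  next
    case False
    then have b1: "b \<le> 1" using ns p unfolding nonstop_def by auto
    have ba: "1 < b * a" using ab by (simp add: mult.commute)
    have st: "B_step \<alpha> (a, b) = (1 / B_s \<alpha> a (B_tilde \<alpha> b a), 1 / B_tilde \<alpha> b a)"
      using step_left(1)[OF al b0 b1 ba] swap_step(1)[OF b1] False by simp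
    have gi': "exp (\<gamma> * (x + y)) * g y x = exp (\<gamma> * (1 / x + 1 / y)) * g (1 / y) (1 / x)"
      if "x > 0" "y > 0" for x y :: real
      using gi[of y x] that by (simp add: add.commute)
    have "g1 a b \<le> g (1 / B_s \<alpha> a (B_tilde \<alpha> b a)) (1 / B_tilde \<alpha> b a)"
      apply (rule g_left[OF al ga, where hh = "\<lambda>x y. g0 y x" and hk = "\<lambda>x y. g1 y x" and g = "\<lambda>x y. g y x"
          and a = b and b = a])
      using g0p apply blast
      using g1p apply blast
      using gs apply blast
      using gi' apply blast
      using gy apply blast
      using gx apply blast
      using b0 b1 ba by auto
    then show ?thesis using st p by simp
  qed
qed

lemma lv_facts:
  assumes al: "0 < \<alpha>" "\<alpha> \<le> 1" and gp: "good \<alpha> p" and ns: "nonstop p"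
  shows "Lv p > 1" "psi \<alpha> (Lv p) - \<alpha> * Lv p - Kv \<alpha> p > 0" "psi \<alpha> 1 - \<alpha> - Kv \<alpha> p > 0"
proof -
  obtain a b where p: "p = (a, b)" by (cases p)
  have a0: "0 < a" and b0: "0 < b" and ab: "1 < a * b" using gp p unfolding good_def by auto
  have "Lv p > 1 \<and> psi \<alpha> (Lv p) - \<alpha> * Lv p - Kv \<alpha> p > 0 \<and> psi \<alpha> 1 - \<alpha> - Kv \<alpha> p > 0"
  proof (cases "a \<le> 1")
    case True
    have K: "psi \<alpha> (1 / a) - \<alpha> * b < -2 * \<alpha>" using gp p True unfolding good_def by auto
    have L: "Lv p = b" "Kv \<alpha> p = psi \<alpha> (1 / a) - \<alpha> * b" using p True unfolding Lv_def Kv_def by auto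
    have ab': "1 / a < b" using ab a0 by (simp add: field_simps)
    have "1 \<le> 1 / a" using a0 True by simp
    then have b1: "b > 1" using ab' by linarith
    have "psi \<alpha> (1 / a) < psi \<alpha> b" using psi_strict_mono[OF al(2) _ ab'] a0 by simp
    then show ?thesis using L K b1 unfolding psi_def by simp
  next
    case False
    then have b1: "b \<le> 1" using ns p unfolding nonstop_def by auto
    have K: "psi \<alpha> (1 / b) - \<alpha> * a < -2 * \<alpha>" using gp p b1 unfolding good_def by auto
    have L: "Lv p = a" "Kv \<alpha> p = psi \<alpha> (1 / b) - \<alpha> * a" using p False unfolding Lv_def Kv_def by auto
    have ab': "1 / b < a" using ab b0 by (simp add: field_simps)
    have "psi \<alpha> (1 / b) < psi \<alpha> a" using psi_strict_mono[OF al(2) _ ab'] b0 by simp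
    then show ?thesis using L K False unfolding psi_def by simp
  qed
  then show "Lv p > 1" "psi \<alpha> (Lv p) - \<alpha> * Lv p - Kv \<alpha> p > 0" "psi \<alpha> 1 - \<alpha> - Kv \<alpha> p > 0" by auto
qed

lemma concave_min:
  assumes "1 \<le> w" "w \<le> L0"
  shows "psi \<alpha> w - \<alpha> * w - K \<ge> min (psi \<alpha> 1 - \<alpha> * 1 - K) (psi \<alpha> L0 - \<alpha> * L0 - K)"
proof (cases "L0 = 1")
  case True
  then have "w = 1" using assms by simp
  then show ?thesis by simp
next
  case False
  then have L1: "L0 > 1" using assms by simp
  define F where "F x = psi \<alpha> x - \<alpha> * x - K" for x
  define m where "m = min (F 1) (F L0)"
  have w0: "w > 0" using assms by simp
  have key: "(L0 - 1) * F w - ((L0 - w) * F 1 + (w - 1) * F L0) = (L0 - 1) * (w - 1) * (L0 - w) / (w * L0)"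
    using w0 L1 unfolding F_def psi_def by (simp add: field_simps)
  have "(L0 - 1) * (w - 1) * (L0 - w) / (w * L0) \<ge> 0" using assms L1 by simp
  then have 1: "(L0 - 1) * F w \<ge> (L0 - w) * F 1 + (w - 1) * F L0" using key by simp
  have "(L0 - w) * F 1 \<ge> (L0 - w) * m" "(w - 1) * F L0 \<ge> (w - 1) * m"
    unfolding m_def using assms by (auto intro: mult_left_mono)
  then have "(L0 - 1) * F w \<ge> (L0 - 1) * m" using 1 by (simp add: algebra_simps)
  then have "F w \<ge> m" using L1 by simp
  then show ?thesis unfolding F_def m_def by simp
qed

lemma omega_aux:
  assumes al: "0 < \<alpha>" "\<alpha> \<le> 1" and X: "X > 1" and Y: "Y > f_alpha \<alpha> X"
  shows "Y > 0" "X * Y > 1" "psi \<alpha> (1 / Y) - \<alpha> * X < -2 * \<alpha>"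
proof -
  define \<beta> where "\<beta> = \<alpha> * (2 - X)"
  define R where "R = sqrt (\<beta>\<^sup>2 + 4 * (1 - \<alpha>))"
  have nn: "0 \<le> \<beta>\<^sup>2 + 4 * (1 - \<alpha>)" using al by (intro add_nonneg_nonneg) auto
  have R2: "R\<^sup>2 = \<beta>\<^sup>2 + 4 * (1 - \<alpha>)" unfolding R_def using nn by (simp only: real_sqrt_pow2)
  have R0: "R \<ge> 0" unfolding R_def using nn by simp
  have f: "f_alpha \<alpha> X = max (1 / X) ((\<beta> + R) / 2)" unfolding f_alpha_def \<beta>_def R_def by (simp add: power_mult_distrib)
  have y1: "Y > 1 / X" and y2: "Y > (\<beta> + R) / 2" using Y f by auto
  show Y0: "Y > 0" using y1 X by (meson less_trans zero_less_divide_1_iff zero_less_one order_less_trans)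
  show "X * Y > 1" using y1 X by (simp add: field_simps)
  have "(Y - (\<beta> + R) / 2) * (Y - (\<beta> - R) / 2) > 0"
    using y2 R0 by (intro mult_pos_pos) auto
  moreover have "(Y - (\<beta> + R) / 2) * (Y - (\<beta> - R) / 2) = Y\<^sup>2 - \<beta> * Y - (1 - \<alpha>)"
    using R2 by (simp add: power2_eq_square field_simps)
  ultimately have q: "Y * Y - \<beta> * Y - (1 - \<alpha>) > 0" by (simp add: power2_eq_square)
  have "psi \<alpha> (1 / Y) - \<alpha> * X + 2 * \<alpha> = ((1 - \<alpha>) - Y * Y + \<beta> * Y) / Y"
    unfolding psi_def \<beta>_def using Y0 by (simp add: field_simps)
  also have "\<dots> < 0" using q Y0 by (simp add: divide_neg_pos)
  finally show "psi \<alpha> (1 / Y) - \<alpha> * X < -2 * \<alpha>" by simp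
qed

definition claim :: "real \<Rightarrow> (real \<Rightarrow> real \<Rightarrow> real) \<Rightarrow> (real \<Rightarrow> real \<Rightarrow> real) \<Rightarrow> (real \<Rightarrow> real \<Rightarrow> real)
    \<Rightarrow> real \<times> real \<Rightarrow> bool" where
  "claim \<alpha> g g0 g1 p \<longleftrightarrow> (\<exists>N::nat. N \<ge> 1
     \<and> (\<forall>i\<in>{1..N}. fst (B_pt \<alpha> p i) > 0 \<and> snd (B_pt \<alpha> p i) > 0)
     \<and> (\<forall>i\<in>{1..<N}. \<not> (fst (B_pt \<alpha> p i) > 1 \<and> snd (B_pt \<alpha> p i) > 1)
                      \<and> B_welldef \<alpha> (B_pt \<alpha> p i))
     \<and> fst (B_pt \<alpha> p N) > 1 \<and> snd (B_pt \<alpha> p N) > 1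
     \<and> g (fst p) (snd p) \<le> (\<Sum>i=1..N. g0 (fst (B_pt \<alpha> p i)) (snd (B_pt \<alpha> p i)))
               + g1 (fst (B_pt \<alpha> p N)) (snd (B_pt \<alpha> p N)))"

lemma Bpt_1: "B_pt \<alpha> p 1 = p" unfolding B_pt_def by simp

lemma Bpt_shift: "i \<ge> 1 \<Longrightarrow> B_pt \<alpha> p (Suc i) = B_pt \<alpha> (B_step \<alpha> p) i"
  unfolding B_pt_def by (cases i) (simp_all add: funpow_swap1)

lemma claim_stop:
  assumes "fst p > 1" "snd p > 1" "g (fst p) (snd p) = g0 (fst p) (snd p) + g1 (fst p) (snd p)"
  shows "claim \<alpha> g g0 g1 p"
  unfolding claim_def by (rule exI[of _ 1]) (use assms in \<open>simp add: B_pt_def\<close>)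

lemma claim_step:
  assumes pos: "fst p > 0" "snd p > 0" and ns: "nonstop p" and wd: "B_welldef \<alpha> p"
    and gs: "g (fst p) (snd p) = g0 (fst p) (snd p) + g1 (fst p) (snd p)"
    and gq: "g1 (fst p) (snd p) \<le> g (fst (B_step \<alpha> p)) (snd (B_step \<alpha> p))"
    and cq: "claim \<alpha> g g0 g1 (B_step \<alpha> p)"
  shows "claim \<alpha> g g0 g1 p"
proof -
  define q where "q = B_step \<alpha> p"
  obtain N where N: "N \<ge> 1"
     "\<forall>i\<in>{1..N}. fst (B_pt \<alpha> q i) > 0 \<and> snd (B_pt \<alpha> q i) > 0"
     "\<forall>i\<in>{1..<N}. \<not> (fst (B_pt \<alpha> q i) > 1 \<and> snd (B_pt \<alpha> q i) > 1)
                      \<and> B_welldef \<alpha> (B_pt \<alpha> q i)"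
     "fst (B_pt \<alpha> q N) > 1" "snd (B_pt \<alpha> q N) > 1"
     "g (fst q) (snd q) \<le> (\<Sum>i=1..N. g0 (fst (B_pt \<alpha> q i)) (snd (B_pt \<alpha> q i)))
               + g1 (fst (B_pt \<alpha> q N)) (snd (B_pt \<alpha> q N))"
    using cq unfolding claim_def q_def by blast
  have sh: "B_pt \<alpha> p (Suc i) = B_pt \<alpha> q i" if "i \<ge> 1" for i using Bpt_shift[OF that] q_def by simp
  define h where "h i = g0 (fst (B_pt \<alpha> p i)) (snd (B_pt \<alpha> p i))" for i
  have sum: "(\<Sum>i=1..Suc N. h i) = h 1 + (\<Sum>i=1..N. g0 (fst (B_pt \<alpha> q i)) (snd (B_pt \<alpha> q i)))"
  proof -
    have "(\<Sum>i=1..Suc N. h i) = h 1 + (\<Sum>i=Suc 1..Suc N. h i)" by (rule sum.atLeast_Suc_atMost) simp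
    also have "(\<Sum>i=Suc 1..Suc N. h i) = (\<Sum>i=1..N. h (Suc i))" by (rule sum.shift_bounds_cl_Suc_ivl)
    also have "\<dots> = (\<Sum>i=1..N. g0 (fst (B_pt \<alpha> q i)) (snd (B_pt \<alpha> q i)))"
      by (rule sum.cong) (auto simp: h_def sh)
    finally show ?thesis .
  qed
  have h1: "h 1 = g0 (fst p) (snd p)" unfolding h_def Bpt_1 by simp
  show ?thesis unfolding claim_def
  proof (rule exI[of _ "Suc N"], intro conjI)
    show "Suc N \<ge> 1" by simp
    show "\<forall>i\<in>{1..Suc N}. fst (B_pt \<alpha> p i) > 0 \<and> snd (B_pt \<alpha> p i) > 0"
    proof
      fix i assume i: "i \<in> {1..Suc N}"
      show "fst (B_pt \<alpha> p i) > 0 \<and> snd (B_pt \<alpha> p i) > 0"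
      proof (cases "i = 1")
        case True then show ?thesis using pos Bpt_1 by simp
      next
        case False
        then obtain j where j: "i = Suc j" "j \<ge> 1" "j \<le> N" using i by (cases i) auto
        then show ?thesis using N(2) sh by auto
      qed
    qed
    show "\<forall>i\<in>{1..<Suc N}. \<not> (fst (B_pt \<alpha> p i) > 1 \<and> snd (B_pt \<alpha> p i) > 1)
                      \<and> B_welldef \<alpha> (B_pt \<alpha> p i)"
    proof
      fix i assume i: "i \<in> {1..<Suc N}"
      show "\<not> (fst (B_pt \<alpha> p i) > 1 \<and> snd (B_pt \<alpha> p i) > 1) \<and> B_welldef \<alpha> (B_pt \<alpha> p i)"
      proof (cases "i = 1")
        case True then show ?thesis using ns wd Bpt_1 unfolding nonstop_def by simp
      next
        case False
        then obtain j where j: "i = Suc j" "j \<ge> 1" "j < N" using i by (cases i) auto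
        then show ?thesis using N(3) sh by auto
      qed
    qed
    show "fst (B_pt \<alpha> p (Suc N)) > 1" "snd (B_pt \<alpha> p (Suc N)) > 1" using N(1,4,5) sh by auto
    have "g (fst p) (snd p) \<le> g0 (fst p) (snd p) + g (fst q) (snd q)" using gs gq q_def by simp
    also have "\<dots> \<le> (\<Sum>i=1..Suc N. h i) + g1 (fst (B_pt \<alpha> q N)) (snd (B_pt \<alpha> q N))"
      using N(6) sum h1 by simp
    also have "\<dots> = (\<Sum>i=1..Suc N. g0 (fst (B_pt \<alpha> p i)) (snd (B_pt \<alpha> p i)))
               + g1 (fst (B_pt \<alpha> p (Suc N))) (snd (B_pt \<alpha> p (Suc N)))"
      using sh N(1) h_def by simp
    finally show "g (fst p) (snd p) \<le> (\<Sum>i=1..Suc N. g0 (fst (B_pt \<alpha> p i)) (snd (B_pt \<alpha> p i)))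
               + g1 (fst (B_pt \<alpha> p (Suc N))) (snd (B_pt \<alpha> p (Suc N)))" .
  qed
qed

lemma main_ind:
  fixes g g0 g1 :: "real \<Rightarrow> real \<Rightarrow> real"
  assumes al: "0 < \<alpha>" "\<alpha> \<le> 1" and ga: "0 \<le> \<gamma>"
    and g0p: "\<And>x y. x > 0 \<Longrightarrow> y > 0 \<Longrightarrow> g0 x y \<ge> 0"
    and g1p: "\<And>x y. x > 0 \<Longrightarrow> y > 0 \<Longrightarrow> g1 x y \<ge> 0"
    and gs: "\<And>x y. x > 0 \<Longrightarrow> y > 0 \<Longrightarrow> g x y = g0 x y + g1 x y"
    and gi: "\<And>x y. x > 0 \<Longrightarrow> y > 0 \<Longrightarrow>
           exp (\<gamma> * (x + y)) * g x y = exp (\<gamma> * (1 / x + 1 / y)) * g (1 / x) (1 / y)"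
    and gx: "\<And>x x' y. 0 < x' \<Longrightarrow> x' \<le> x \<Longrightarrow> y > 0 \<Longrightarrow>
           g1 x y \<le> exp (- \<alpha> * \<gamma> * (x - x')) * g1 x' y"
    and gy: "\<And>x y y'. 0 < y' \<Longrightarrow> y' \<le> y \<Longrightarrow> x > 0 \<Longrightarrow>
           g1 x y \<le> exp (- \<alpha> * \<gamma> * (y - y')) * g1 x y'"
    and dp: "0 < \<delta>" and dw: "\<And>w. 1 \<le> w \<Longrightarrow> w \<le> L0 \<Longrightarrow> \<delta> \<le> psi \<alpha> w - \<alpha> * w - K"
  shows "good \<alpha> p \<Longrightarrow> nonstop p \<Longrightarrow> Kv \<alpha> p = K \<Longrightarrow> Lv p \<le> L0
     \<Longrightarrow> Lv p < 1 + real n * \<delta> / 2 \<Longrightarrow> claim \<alpha> g g0 g1 p"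
proof (induction n arbitrary: p)
  case 0
  then show ?case using lv_facts[OF al] by fastforce
next
  case (Suc n)
  define q where "q = B_step \<alpha> p"
  note SF = step_full[OF al Suc.prems(1,2), folded q_def]
  have pos: "fst p > 0" "snd p > 0" using Suc.prems(1) unfolding good_def by auto
  have gq: "g1 (fst p) (snd p) \<le> g (fst q) (snd q)"
    using g_full[OF al ga g0p g1p gs gi gx gy Suc.prems(1,2)] q_def by simp
  have qpos: "fst q > 0" "snd q > 0" using SF(2) unfolding good_def by auto
  have cq: "claim \<alpha> g g0 g1 q"
  proof (cases "nonstop q")
    case False
    then show ?thesis using claim_stop[of q g g0 g1] gs qpos unfolding nonstop_def by auto
  next
    case True
    note D = SF(3)[OF True]
    have L1: "Lv p > 1" using lv_facts[OF al Suc.prems(1,2)] by simp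
    have "\<delta> \<le> psi \<alpha> (Lv p) - \<alpha> * Lv p - K" using dw L1 Suc.prems(4) by simp
    then have "Lv q \<le> Lv p - \<delta> / 2" using D Suc.prems(3) by simp
    moreover have "real (Suc n) * \<delta> / 2 = real n * \<delta> / 2 + \<delta> / 2" by (simp add: algebra_simps add_divide_distrib)
    ultimately have "Lv q < 1 + real n * \<delta> / 2" using Suc.prems(5) by linarith
    moreover have "Lv q \<le> L0" using D Suc.prems(4) by simp
    ultimately show ?thesis using Suc.IH[OF SF(2) True] D Suc.prems(3) by simp
  qed
  show ?case
    by (rule claim_step[OF pos Suc.prems(2) SF(1) gs[OF pos] _ cq[unfolded q_def]])
       (use gq q_def in simp)
qed

theorem lemma1:
  fixes \<alpha> \<gamma> :: real and g g0 g1 :: "real \<Rightarrow> real \<Rightarrow> real"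
  assumes "0 < \<alpha>" "\<alpha> \<le> 1" "0 \<le> \<gamma>"
    and "\<And>x y. x > 0 \<Longrightarrow> y > 0 \<Longrightarrow> g x y > 0"
    and "\<And>x y. x > 0 \<Longrightarrow> y > 0 \<Longrightarrow> g0 x y \<ge> 0"
    and "\<And>x y. x > 0 \<Longrightarrow> y > 0 \<Longrightarrow> g1 x y \<ge> 0"
    and "\<And>x y. x > 0 \<Longrightarrow> y > 0 \<Longrightarrow> g x y = g0 x y + g1 x y"
    and "\<And>x y. x > 0 \<Longrightarrow> y > 0 \<Longrightarrow>
           exp (\<gamma> * (x + y)) * g x y = exp (\<gamma> * (1 / x + 1 / y)) * g (1 / x) (1 / y)"
    and "\<And>x x' y. 0 < x' \<Longrightarrow> x' \<le> x \<Longrightarrow> y > 0 \<Longrightarrow>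
           g1 x y \<le> exp (- \<alpha> * \<gamma> * (x - x')) * g1 x' y"
    and "\<And>x y y'. 0 < y' \<Longrightarrow> y' \<le> y \<Longrightarrow> x > 0 \<Longrightarrow>
           g1 x y \<le> exp (- \<alpha> * \<gamma> * (y - y')) * g1 x y'"
    and "(x, y) \<in> Omega_alpha \<alpha>"
  shows "\<exists>N::nat. N \<ge> 1
     \<and> (\<forall>i\<in>{1..N}. fst (B_pt \<alpha> (x, y) i) > 0 \<and> snd (B_pt \<alpha> (x, y) i) > 0)
     \<and> (\<forall>i\<in>{1..<N}. \<not> (fst (B_pt \<alpha> (x, y) i) > 1 \<and> snd (B_pt \<alpha> (x, y) i) > 1)
                      \<and> B_welldef \<alpha> (B_pt \<alpha> (x, y) i))
     \<and> fst (B_pt \<alpha> (x, y) N) > 1 \<and> snd (B_pt \<alpha> (x, y) N) > 1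
     \<and> g x y \<le> (\<Sum>i=1..N. g0 (fst (B_pt \<alpha> (x, y) i)) (snd (B_pt \<alpha> (x, y) i)))
               + g1 (fst (B_pt \<alpha> (x, y) N)) (snd (B_pt \<alpha> (x, y) N))"
proof -
  note al = assms(1,2) and ga = assms(3) and g0p = assms(5) and g1p = assms(6) and gs = assms(7)
    and gi = assms(8) and gx = assms(9) and gy = assms(10)
  define p where "p = (x, y)"
  have gp: "good \<alpha> p"
  proof -
    have "(x > 1 \<and> y > f_alpha \<alpha> x) \<or> (y > 1 \<and> x > f_alpha \<alpha> y)"
      using assms(11) unfolding Omega_alpha_def by auto
    then show ?thesis
    proof
      assume h: "x > 1 \<and> y > f_alpha \<alpha> x"
      note O = omega_aux[OF al, of x y]
      show ?thesis unfolding good_def p_def using h O by auto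
    next
      assume h: "y > 1 \<and> x > f_alpha \<alpha> y"
      note O = omega_aux[OF al, of y x]
      show ?thesis unfolding good_def p_def using h O by (auto simp: mult.commute)
    qed
  qed
  have pos: "x > 0" "y > 0" using gp unfolding good_def p_def by auto
  have "claim \<alpha> g g0 g1 p"
  proof (cases "nonstop p")
    case False
    then show ?thesis using claim_stop[of p g g0 g1] gs pos unfolding nonstop_def p_def by auto
  next
    case True
    define K where "K = Kv \<alpha> p"
    define L0 where "L0 = Lv p"
    define \<delta> where "\<delta> = min (psi \<alpha> 1 - \<alpha> * 1 - K) (psi \<alpha> L0 - \<alpha> * L0 - K)"
    note LF = lv_facts[OF al gp True, folded K_def L0_def]
    have dp: "\<delta> > 0" unfolding \<delta>_def using LF by simp
    have dw: "\<delta> \<le> psi \<alpha> w - \<alpha> * w - K" if "1 \<le> w" "w \<le> L0" for w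
      unfolding \<delta>_def by (rule concave_min[OF that])
    obtain n :: nat where n: "(L0 - 1) / (\<delta> / 2) < real n" using reals_Archimedean2 by blast
    then have "L0 - 1 < real n * (\<delta> / 2)" using dp by (simp add: field_simps)
    then have "Lv p < 1 + real n * \<delta> / 2" unfolding L0_def by simp
    then show ?thesis
      using main_ind[OF al ga g0p g1p gs gi gx gy dp dw gp True] K_def L0_def by simp
  qed
  then show ?thesis unfolding claim_def p_def by simp
qed

end
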